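(* Let $N\ge2$ and let $a_i=(\alpha_i,N)$, $i=1,\dots,m$, be transpositions in $S_N$ with $1\le\alpha_i\le N-1$, such that the partition $\pi$ of $\{1,\dots,m\}$ defined by $j\sim k\iff a_j=a_k$ belongs to $NC_{1,2}(m)$. Let $i_1<\dots<i_k$ be the elements of those one-element blocks of $\pi$ that are not inner blocks of any two-element block. Then the cycle decomposition of $\sigma=a_1\cdots a_m$ is as follows: (i) if $k\ge1$, $\sigma$ has the cycle $(N,\alpha_{i_k},\alpha_{i_{k-1}},\dots,\alpha_{i_1})$; if $k=0$, $N$ is a fixed point of $\sigma$; (ii) for every two-element block $\{p,r\}$ of $\pi$ having at least one direct inner one-element block, with the direct inner one-element blocks being $\{j_1\},\dots,\{j_l\}$, $j_1<\dots<j_l$, $\sigma$ has the cycle $(\alpha_r,\alpha_{j_l},\dots,\alpha_{j_1})$ (here $\alpha_r=\alpha_p$); (iii) these are all the nontrivial cycles of $\sigma$; all other points are fixed.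
   Context: Products of permutations are compositions, rightmost factor acting first; a cycle $(x_1,x_2,\dots,x_t)$ maps $x_1\mapsto x_2\mapsto\dots\mapsto x_t\mapsto x_1$. $NC_{1,2}(m)$ is the set of non-crossing partitions of $\{1,\dots,m\}$ all of whose blocks have one or two elements (non-crossing: no $k_1<l_1<k_2<l_2$ with $k_1,k_2$ in one block and $l_1,l_2$ in another). A block $B$ is an inner block of a block $B'$ if $B'$ contains an element smaller than all elements of $B$ and an element larger than all elements of $B$. $B$ is a direct inner block of $B''$ if $B$ is an inner block of $B''$ and there is no block $B'$ such that $B$ is an inner block of $B'$ and $B'$ is an inner block of $B''$. *)

theory Defs
  imports Main "HOL-Combinatorics.Transposition" "HOL-Library.Disjoint_Sets"
begin

definition noncrossing :: "nat set set \<Rightarrow> bool" where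
  "noncrossing P \<longleftrightarrow> (\<forall>B\<in>P. \<forall>B'\<in>P. B \<noteq> B' \<longrightarrow>
     \<not> (\<exists>k1 l1 k2 l2. k1 < l1 \<and> l1 < k2 \<and> k2 < l2 \<and> k1 \<in> B \<and> k2 \<in> B \<and> l1 \<in> B' \<and> l2 \<in> B'))"

definition NC12 :: "nat \<Rightarrow> nat set set set" where
  "NC12 m = {P. partition_on {1..m} P \<and> (\<forall>B\<in>P. card B = 1 \<or> card B = 2) \<and> noncrossing P}"

definition inner_block :: "nat set \<Rightarrow> nat set \<Rightarrow> bool" where
  "inner_block B B' \<longleftrightarrow> (\<exists>x\<in>B'. \<forall>y\<in>B. x < y) \<and> (\<exists>x\<in>B'. \<forall>y\<in>B. y < x)"

definition direct_inner_block :: "nat set set \<Rightarrow> nat set \<Rightarrow> nat set \<Rightarrow> bool" where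
  "direct_inner_block P B B'' \<longleftrightarrow> inner_block B B'' \<and>
     \<not> (\<exists>B'\<in>P. inner_block B B' \<and> inner_block B' B'')"

text \<open>The partition of {1..m} given by j ~ k iff a_j = a_k (a_j = (alpha_j, N), alpha_j < N).\<close>
definition kernel_partition :: "(nat \<Rightarrow> nat) \<Rightarrow> nat \<Rightarrow> nat set set" where
  "kernel_partition \<alpha> m = {{k\<in>{1..m}. \<alpha> k = \<alpha> j} | j. j \<in> {1..m}}"

text \<open>Product a_1 a_2 ... a_m (composition, rightmost factor acts first).\<close>
definition transp_product :: "nat \<Rightarrow> (nat \<Rightarrow> nat) \<Rightarrow> nat \<Rightarrow> nat \<Rightarrow> nat" where
  "transp_product N \<alpha> m = foldr (\<circ>) (map (\<lambda>i. transpose (\<alpha> i) N) [1..<Suc m]) id"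

definition has_cycle :: "(nat \<Rightarrow> nat) \<Rightarrow> nat list \<Rightarrow> bool" where
  "has_cycle \<sigma> xs \<longleftrightarrow> xs \<noteq> [] \<and> distinct xs \<and>
     (\<forall>i < length xs. \<sigma> (xs ! i) = xs ! ((i + 1) mod length xs))"

definition outer_singletons :: "nat set set \<Rightarrow> nat set" where
  "outer_singletons P = {i. {i} \<in> P \<and> \<not> (\<exists>B\<in>P. card B = 2 \<and> inner_block {i} B)}"

definition direct_inner_singletons :: "nat set set \<Rightarrow> nat set \<Rightarrow> nat set" where
  "direct_inner_singletons P B = {j. {j} \<in> P \<and> direct_inner_block P {j} B}"

definition outer_cycle :: "nat \<Rightarrow> (nat \<Rightarrow> nat) \<Rightarrow> nat set set \<Rightarrow> nat list" where
  "outer_cycle N \<alpha> P = N # rev (map \<alpha> (sorted_list_of_set (outer_singletons P)))"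

definition block_cycle :: "(nat \<Rightarrow> nat) \<Rightarrow> nat set set \<Rightarrow> nat set \<Rightarrow> nat list" where
  "block_cycle \<alpha> P B = \<alpha> (Max B) # rev (map \<alpha> (sorted_list_of_set (direct_inner_singletons P B)))"

end

theory Submission
  imports Defs
begin


lemma cyc_list:
  fixes L :: "nat list"
  assumes srt: "sorted_wrt (<) L" and ne: "L \<noteq> []" and inj: "inj_on f (set L)"
    and h: "h \<notin> f ` set L" and hs: "\<sigma> h = f (last L)"
    and st: "\<And>t. t < length L \<Longrightarrow> \<sigma> (f (L!t)) = (if t = 0 then h else f (L!(t-1)))"
  shows "has_cycle \<sigma> (h # rev (map f L))"
proof -
  let ?xs = "h # rev (map f L)"
  define n where "n = length L"
  have n1: "n \<ge> 1" using ne n_def by (cases L) auto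
  have dL: "distinct L" using srt by (simp add: strict_sorted_iff)
  have dist: "distinct ?xs" using dL inj h by (auto simp: distinct_map)
  have len: "length ?xs = Suc n" by (simp add: n_def)
  have nth: "?xs ! Suc s = f (L ! (n - 1 - s))" if "s < n" for s
    using that by (simp add: rev_nth n_def)
  have "\<sigma> (?xs ! i) = ?xs ! ((i + 1) mod length ?xs)" if "i < length ?xs" for i
  proof (cases i)
    case 0
    have "last L = L ! (n - 1)" using ne by (simp add: last_conv_nth n_def)
    then show ?thesis using 0 n1 hs nth[of 0] len
      by (cases "n = 1") auto
  next
    case (Suc s)
    have s: "s < n" using that Suc len by simp
    have e1: "\<sigma> (?xs ! i) = (if n - 1 - s = 0 then h else f (L!(n - 1 - s - 1)))"
      using Suc nth[OF s] st[of "n - 1 - s"] s n_def by auto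
    show ?thesis
    proof (cases "s = n - 1")
      case True
      then have "(i+1) mod length ?xs = 0" using Suc len n1 by simp
      then show ?thesis using e1 True by simp
    next
      case False
      then have s2: "Suc s < n" using s by simp
      have "(i+1) mod length ?xs = Suc (Suc s)" using Suc len s2 by simp
      moreover have "?xs ! Suc (Suc s) = f (L ! (n - 1 - Suc s))" using nth[OF s2] .
      moreover have "\<not> n - 1 - s = 0" "n - 1 - s - 1 = n - 1 - Suc s" using s2 by auto
      ultimately show ?thesis using e1 by simp
    qed
  qed
  then show ?thesis unfolding has_cycle_def using dist by simp
qed

lemma sorted_nth_lt:
  fixes L :: "nat list"
  assumes "sorted_wrt (<) L" "u < length L" "t < length L" "L!u < L!t"
  shows "u < t"
proof (rule ccontr)
  assume "\<not> u < t"
  then have "t = u \<or> t < u" by auto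
  then show False using assms sorted_wrt_nth_less[OF assms(1), of t u] by auto
qed

lemma sorted_nth_le:
  fixes L :: "nat list"
  assumes "sorted_wrt (<) L" "u \<le> t" "t < length L"
  shows "L!u \<le> L!t"
  using assms sorted_wrt_nth_less[OF assms(1), of u t] by (cases "u = t") auto

lemma cyc_set:
  fixes S :: "nat set"
  assumes fin: "finite S" and ne: "S \<noteq> {}" and inj: "inj_on f S"
    and h: "h \<notin> f ` S" and hs: "\<sigma> h = f (Max S)"
    and st: "\<forall>j\<in>S. \<sigma> (f j) = (if \<exists>i\<in>S. i < j then f (Max {i\<in>S. i < j}) else h)"
  shows "has_cycle \<sigma> (h # rev (map f (sorted_list_of_set S)))"
proof -
  define L where "L = sorted_list_of_set S"
  have srt: "sorted_wrt (<) L" unfolding L_def by (rule strict_sorted_list_of_set)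
  have setL: "set L = S" unfolding L_def using fin by simp
  have Lne: "L \<noteq> []" using setL ne by auto
  have inS: "\<And>i. i \<in> S \<Longrightarrow> \<exists>u<length L. i = L!u" using setL by (metis in_set_conv_nth)
  have last: "last L = Max S"
  proof (rule sym, rule Max_eqI[OF fin])
    show "last L \<in> S" using Lne setL by auto
    fix y assume "y \<in> S"
    then obtain u where "u < length L" "y = L!u" using inS by blast
    then show "y \<le> last L" using sorted_nth_le[OF srt, of u "length L - 1"] Lne
      by (simp add: last_conv_nth)
  qed
  have step: "\<sigma> (f (L!t)) = (if t = 0 then h else f (L!(t-1)))" if t: "t < length L" for t
  proof -
    have Lt: "L!t \<in> S" using t setL by auto
    have lt: "\<And>i. i \<in> S \<Longrightarrow> i < L!t \<Longrightarrow> \<exists>u<t. i = L!u"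
      using inS sorted_nth_lt[OF srt] t by blast
    show ?thesis
    proof (cases t)
      case 0
      then have "\<not> (\<exists>i\<in>S. i < L!t)" using lt by blast
      then show ?thesis using st Lt 0 by auto
    next
      case (Suc t')
      have mem: "L!t' \<in> S" "L!t' < L!t" using Suc t setL sorted_wrt_nth_less[OF srt, of t' t] by auto
      have "Max {i\<in>S. i < L!t} = L!t'"
      proof (rule Max_eqI)
        show "finite {i\<in>S. i < L!t}" using fin by simp
        show "L!t' \<in> {i\<in>S. i < L!t}" using mem by simp
        fix y assume "y \<in> {i\<in>S. i < L!t}"
        then obtain u where "u < t" "y = L!u" using lt by blast
        then show "y \<le> L!t'" using sorted_nth_le[OF srt, of u t'] Suc t by simp
      qed
      then show ?thesis using st Lt mem Suc by auto
    qed
  qed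
  show ?thesis unfolding L_def[symmetric]
    by (rule cyc_list[OF srt Lne]) (use inj h hs setL last step in auto)
qed



lemma foldr_comp: "foldr (\<circ>) xs g = foldr (\<circ>) xs id \<circ> g"
  by (induction xs) (auto simp: comp_assoc)

lemma Tr_0: "transp_product N \<alpha> 0 = id"
  by (simp add: transp_product_def)

lemma Tr_Suc: "transp_product N \<alpha> (Suc k) = transp_product N \<alpha> k \<circ> transpose (\<alpha> (Suc k)) N"
proof -
  have "[1..<Suc (Suc k)] = [1..<Suc k] @ [Suc k]" by simp
  then show ?thesis unfolding transp_product_def
    by (simp del: upt_Suc) (subst foldr_comp, simp)
qed

lemma max_split:
  fixes Q :: "nat \<Rightarrow> bool"
  assumes fin: "finite {i. Q i}" and Qp: "Q p" and iff: "\<And>i. p < i \<Longrightarrow> Q i \<longleftrightarrow> i \<in> D"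
    and gt: "\<And>i. i \<in> D \<Longrightarrow> p < i"
  shows "Max {i. Q i} = (if D = {} then p else Max D)"
proof -
  have DQ: "D \<subseteq> {i. Q i}" using iff gt by auto
  have finD: "finite D" using finite_subset[OF DQ fin] .
  show ?thesis
  proof (cases "D = {}")
    case True
    have "Max {i. Q i} = p"
    proof (rule Max_eqI[OF fin])
      fix y assume "y \<in> {i. Q i}" then show "y \<le> p" using iff True by (cases "p < y") auto
    qed (use Qp in auto)
    then show ?thesis using True by simp
  next
    case False
    have MD: "Max D \<in> D" using Max_in[OF finD False] .
    have "Max {i. Q i} = Max D"
    proof (rule Max_eqI[OF fin])
      show "Max D \<in> {i. Q i}" using MD DQ by auto
      fix y assume y: "y \<in> {i. Q i}"
      show "y \<le> Max D"
      proof (cases "p < y")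
        case True then show ?thesis using iff y Max_ge[OF finD] by auto
      next
        case False then show ?thesis using gt[OF MD] by auto
      qed
    qed
    then show ?thesis using False by simp
  qed
qed

locale LS =
  fixes N m :: nat and \<alpha> :: "nat \<Rightarrow> nat"
  assumes rng: "\<And>i. i \<in> {1..m} \<Longrightarrow> 1 \<le> \<alpha> i \<and> \<alpha> i < N"
  and three: "\<And>i j k. i\<in>{1..m} \<Longrightarrow> j\<in>{1..m} \<Longrightarrow> k\<in>{1..m} \<Longrightarrow> \<alpha> i = \<alpha> j \<Longrightarrow> \<alpha> i = \<alpha> k \<Longrightarrow> i = j \<or> i = k \<or> j = k"
  and nc: "\<And>a b c d. 1 \<le> a \<Longrightarrow> a < b \<Longrightarrow> b < c \<Longrightarrow> c < d \<Longrightarrow> d \<le> m \<Longrightarrow> \<alpha> a = \<alpha> c \<Longrightarrow> \<alpha> b = \<alpha> d \<Longrightarrow> False"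
begin

abbreviation "Tr \<equiv> transp_product N \<alpha>"

lemma L1: "v \<noteq> N \<Longrightarrow> j \<le> k \<Longrightarrow> (\<forall>i. j < i \<and> i \<le> k \<longrightarrow> \<alpha> i \<noteq> v) \<Longrightarrow> Tr k v = Tr j v"
proof (induction k)
  case 0 then show ?case by simp
next
  case (Suc k)
  show ?case
  proof (cases "j = Suc k")
    case False
    then have "j \<le> k" using Suc by simp
    then have "Tr k v = Tr j v" using Suc by auto
    moreover have "\<alpha> (Suc k) \<noteq> v" using Suc \<open>j \<le> k\<close> by auto
    ultimately show ?thesis using Suc by (simp add: Tr_Suc)
  qed simp
qed

definition vis :: "nat \<Rightarrow> nat \<Rightarrow> bool" where
  "vis k i \<longleftrightarrow> 1 \<le> i \<and> i \<le> k \<and> (\<forall>j\<in>{1..m}. \<alpha> j = \<alpha> i \<longrightarrow> j = i \<or> k < j)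
     \<and> \<not> (\<exists>p q. 1 \<le> p \<and> p < i \<and> i < q \<and> q \<le> k \<and> \<alpha> p = \<alpha> q)"

definition Fv :: "nat \<Rightarrow> nat" where
  "Fv k = (if {i. vis k i} = {} then N else \<alpha> (Max {i. vis k i}))"

lemma visD0: "vis k i \<Longrightarrow> 1 \<le> i \<and> i \<le> k" by (simp add: vis_def)
lemma visD1: "vis k i \<Longrightarrow> j \<in> {1..m} \<Longrightarrow> \<alpha> j = \<alpha> i \<Longrightarrow> j = i \<or> k < j"
  unfolding vis_def by blast
lemma visD2: "vis k i \<Longrightarrow> 1 \<le> p \<Longrightarrow> p < i \<Longrightarrow> i < q \<Longrightarrow> q \<le> k \<Longrightarrow> \<alpha> p = \<alpha> q \<Longrightarrow> False"
  unfolding vis_def by blast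
lemma visI: "1 \<le> i \<Longrightarrow> i \<le> k \<Longrightarrow> (\<And>j. j \<in> {1..m} \<Longrightarrow> \<alpha> j = \<alpha> i \<Longrightarrow> j \<noteq> i \<Longrightarrow> k < j)
  \<Longrightarrow> (\<And>p q. 1 \<le> p \<Longrightarrow> p < i \<Longrightarrow> i < q \<Longrightarrow> q \<le> k \<Longrightarrow> \<alpha> p = \<alpha> q \<Longrightarrow> False) \<Longrightarrow> vis k i"
  unfolding vis_def by blast

lemma fin_vis: "finite {i. vis k i}"
  by (rule finite_subset[of _ "{..k}"]) (auto dest: visD0)

lemma F_char: "k \<le> m \<Longrightarrow> Tr k N = Fv k"
proof (induction k rule: less_induct)
  case (less k)
  show ?case
  proof (cases k)
    case 0
    then show ?thesis by (simp add: Tr_0 Fv_def vis_def)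
  next
    case (Suc k')
    have km: "k \<in> {1..m}" using less Suc by simp
    have aN: "\<alpha> k \<noteq> N" using rng[OF km] by simp
    have e0: "Tr k N = Tr k' (\<alpha> k)" using Suc by (simp add: Tr_Suc)
    show ?thesis
    proof (cases "\<exists>p. 1 \<le> p \<and> p < k \<and> \<alpha> p = \<alpha> k")
      case False
      have "Tr k' (\<alpha> k) = Tr 0 (\<alpha> k)"
        by (rule L1) (use aN False Suc in auto)
      then have e1: "Tr k N = \<alpha> k" using e0 by (simp add: Tr_0)
      have vk: "vis k k"
      proof (rule visI)
        fix j assume "j \<in> {1..m}" "\<alpha> j = \<alpha> k" "j \<noteq> k"
        then show "k < j" using False by (cases "j < k") auto
      qed (use km in auto)
      have "Max {i. vis k i} = k"
        by (rule Max_eqI[OF fin_vis]) (use vk in \<open>auto dest: visD0\<close>)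
      then show ?thesis using e1 vk by (auto simp: Fv_def)
    next
      case True
      then obtain p where p: "1 \<le> p" "p < k" "\<alpha> p = \<alpha> k" by blast
      then obtain p' where p': "p = Suc p'" by (cases p) auto
      have pm: "p \<in> {1..m}" using p km by simp
      have "Tr k' (\<alpha> k) = Tr p (\<alpha> k)"
      proof (rule L1)
        show "\<forall>i. p < i \<and> i \<le> k' \<longrightarrow> \<alpha> i \<noteq> \<alpha> k"
        proof (intro allI impI)
          fix i assume i: "p < i \<and> i \<le> k'"
          show "\<alpha> i \<noteq> \<alpha> k"
          proof
            assume "\<alpha> i = \<alpha> k"
            then show False using three[OF pm km, of i] p i Suc km by auto
          qed
        qed
      qed (use aN p Suc in auto)
      also have "\<dots> = Tr p' N" using p p' by (simp add: Tr_Suc)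
      also have "\<dots> = Fv p'" using less.IH[of p'] p p' less.prems by simp
      finally have e1: "Tr k N = Fv p'" using e0 by simp
      have "{i. vis k i} = {i. vis p' i}"
      proof (intro set_eqI iffI; simp)
        fix i assume v: "vis k i"
        have i1: "1 \<le> i" "i \<le> k" using visD0[OF v] by auto
        have "i \<noteq> k"
        proof
          assume "i = k" then show False using visD1[OF v pm] p by auto
        qed
        moreover have "i \<noteq> p"
        proof
          assume "i = p" then show False using visD1[OF v km] p by auto
        qed
        moreover have "\<not> (p < i \<and> i < k)" using visD2[OF v p(1) _ _ _ p(3)] by auto
        ultimately have ip: "i < p" using i1 by auto
        show "vis p' i"
        proof (rule visI)
          show "1 \<le> i" "i \<le> p'" using i1 ip p' by auto
          fix j assume "j \<in> {1..m}" "\<alpha> j = \<alpha> i" "j \<noteq> i"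
          then show "p' < j" using visD1[OF v, of j] p' p by auto
        next
          fix p0 q0 assume "1 \<le> p0" "p0 < i" "i < q0" "q0 \<le> p'" "\<alpha> p0 = \<alpha> q0"
          then show False using visD2[OF v, of p0 q0] p p' by auto
        qed
      next
        fix i assume v: "vis p' i"
        then have ip: "i < p" "1 \<le> i" using p' visD0[OF v] by auto
        have im: "i \<in> {1..m}" using ip p km by auto
        show "vis k i"
        proof (rule visI)
          show "1 \<le> i" "i \<le> k" using ip p by auto
        next
          fix j assume j: "j \<in> {1..m}" "\<alpha> j = \<alpha> i" "j \<noteq> i"
          have "p \<le> j" using visD1[OF v j(1,2)] j p' by auto
          moreover have "j \<noteq> p" "j \<noteq> k"
            using three[OF im pm km] j ip p by auto
          moreover have "\<not> (p < j \<and> j < k)"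
          proof
            assume "p < j \<and> j < k" then show False using nc[of i p j k] j ip p km by auto
          qed
          ultimately show "k < j" by auto
        next
          fix p0 q0 assume q: "1 \<le> p0" "p0 < i" "i < q0" "q0 \<le> k" "\<alpha> p0 = \<alpha> q0"
          have "\<not> q0 \<le> p'" using visD2[OF v q(1,2,3) _ q(5)] by auto
          then have "p \<le> q0" using p' by simp
          moreover have p0m: "p0 \<in> {1..m}" "q0 \<in> {1..m}" using q ip p km by auto
          moreover have "q0 \<noteq> p" "q0 \<noteq> k"
            using three[OF p0m(1) pm km] q ip p by auto
          moreover have "\<not> (p < q0 \<and> q0 < k)"
          proof
            assume "p < q0 \<and> q0 < k" then show False using nc[of p0 p q0 k] q ip p km by auto
          qed
          ultimately show False using q by auto
        qed
      qed
      then have "Fv k = Fv p'" unfolding Fv_def by (simp only:)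
      then show ?thesis using e1 by simp
    qed
  qed
qed


lemma S2: assumes r: "r \<in> {1..m}" and nr: "\<forall>i. r < i \<and> i \<le> m \<longrightarrow> \<alpha> i \<noteq> \<alpha> r"
  shows "Tr m (\<alpha> r) = Fv (r - 1)"
proof -
  have aN: "\<alpha> r \<noteq> N" using rng[OF r] by simp
  have "Tr m (\<alpha> r) = Tr r (\<alpha> r)" by (rule L1) (use aN nr r in auto)
  also have "\<dots> = Tr (r - 1) N" using r by (cases r) (auto simp: Tr_Suc)
  also have "\<dots> = Fv (r - 1)" by (rule F_char) (use r in auto)
  finally show ?thesis .
qed

lemma S3: "v \<noteq> N \<Longrightarrow> \<forall>i\<in>{1..m}. \<alpha> i \<noteq> v \<Longrightarrow> Tr m v = v"
  using L1[of v 0 m] by (auto simp: Tr_0)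

definition sing :: "nat \<Rightarrow> bool" where
  "sing i \<longleftrightarrow> i \<in> {1..m} \<and> (\<forall>k\<in>{1..m}. \<alpha> k = \<alpha> i \<longrightarrow> k = i)"
definition encl :: "nat \<Rightarrow> bool" where
  "encl i \<longleftrightarrow> (\<exists>p q. 1 \<le> p \<and> p < i \<and> i < q \<and> q \<le> m \<and> \<alpha> p = \<alpha> q)"
definition OS :: "nat set" where "OS = {i. sing i \<and> \<not> encl i}"
definition DS :: "nat \<Rightarrow> nat \<Rightarrow> nat set" where
  "DS p r = {j. sing j \<and> p < j \<and> j < r \<and> \<not> (\<exists>p' q'. p < p' \<and> p' < j \<and> j < q' \<and> q' < r \<and> \<alpha> p' = \<alpha> q')}"

lemma singD: "sing i \<Longrightarrow> k \<in> {1..m} \<Longrightarrow> \<alpha> k = \<alpha> i \<Longrightarrow> k = i" by (simp add: sing_def)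

lemma visOS: "{i. vis m i} = OS"
proof (intro set_eqI iffI)
  fix i assume "i \<in> {i. vis m i}"
  then have v: "vis m i" by simp
  have "sing i" unfolding sing_def using visD0[OF v] visD1[OF v] by auto
  moreover have "\<not> encl i" unfolding encl_def using visD2[OF v] by blast
  ultimately show "i \<in> OS" by (simp add: OS_def)
next
  fix i assume "i \<in> OS"
  then have s: "sing i" and e: "\<not> encl i" by (auto simp: OS_def)
  show "i \<in> {i. vis m i}"
    using s e unfolding sing_def encl_def by (auto intro!: visI)
qed

lemma visOSj: assumes j: "j \<in> OS" shows "{i. vis (j - 1) i} = {i \<in> OS. i < j}"
proof (intro set_eqI iffI)
  have sj: "sing j" and ej: "\<not> encl j" using j by (auto simp: OS_def)
  have jm: "j \<in> {1..m}" using sj by (simp add: sing_def)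
  {
  fix i assume "i \<in> {i. vis (j - 1) i}"
  then have v: "vis (j - 1) i" by simp
  have ij: "1 \<le> i" "i < j" using visD0[OF v] jm by auto
  have im: "i \<in> {1..m}" using ij jm by auto
  have "sing i" unfolding sing_def
  proof (intro conjI ballI impI)
    fix k assume k: "k \<in> {1..m}" "\<alpha> k = \<alpha> i"
    show "k = i"
    proof (rule ccontr)
      assume ki: "k \<noteq> i"
      then have "j - 1 < k" using visD1[OF v k] by auto
      moreover have "k \<noteq> j" using singD[OF sj im] k ki by auto
      ultimately have "j < k" by auto
      then show False using ej k ij unfolding encl_def by (metis atLeastAtMost_iff)
    qed
  qed (use im in auto)
  moreover have "\<not> encl i"
  proof
    assume "encl i"
    then obtain p q where pq: "1 \<le> p" "p < i" "i < q" "q \<le> m" "\<alpha> p = \<alpha> q" unfolding encl_def by blast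
    have "\<not> q \<le> j - 1" using visD2[OF v pq(1,2,3) _ pq(5)] by auto
    moreover have "q \<noteq> j" using singD[OF sj, of p] pq ij jm by auto
    ultimately have "j < q" by auto
    then show False using ej pq ij unfolding encl_def by auto
  qed
  ultimately show "i \<in> {i \<in> OS. i < j}" using ij by (simp add: OS_def)
  }
  {
  fix i assume "i \<in> {i \<in> OS. i < j}"
  then have s: "sing i" "\<not> encl i" "i < j" by (auto simp: OS_def)
  have "vis (j - 1) i"
  proof (rule visI)
    fix p q assume "1 \<le> p" "p < i" "i < q" "q \<le> j - 1" "\<alpha> p = \<alpha> q"
    then show False using s jm unfolding encl_def by auto
  qed (use s in \<open>auto simp: sing_def\<close>)
  then show "i \<in> {i. vis (j - 1) i}" by simp
  }
qed


definition pr :: "nat \<Rightarrow> nat \<Rightarrow> bool" where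
  "pr p r \<longleftrightarrow> 1 \<le> p \<and> p < r \<and> r \<le> m \<and> \<alpha> p = \<alpha> r"

lemma vis_p: assumes pr: "pr p r" and k: "p \<le> k" "k < r" shows "vis k p"
proof (rule visI)
  have pm: "p \<in> {1..m}" and rm: "r \<in> {1..m}" and pr': "p < r" "\<alpha> p = \<alpha> r" "1 \<le> p"
    using pr by (auto simp: pr_def)
  show "1 \<le> p" "p \<le> k" using pr' k by auto
  fix j assume j: "j \<in> {1..m}" "\<alpha> j = \<alpha> p" "j \<noteq> p"
  have "p = r \<or> p = j \<or> r = j" using three[OF pm rm j(1) pr'(2)] j(2) by simp
  then have "j = r" using pr'(1) j(3) by auto
  then show "k < j" using k by simp
next
  fix p0 q0 assume q: "1 \<le> p0" "p0 < p" "p < q0" "q0 \<le> k" "\<alpha> p0 = \<alpha> q0"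
  then show False using nc[of p0 p q0 r] pr k by (auto simp: pr_def)
qed

lemma DS_vis: assumes pr: "pr p r" and i: "i \<in> DS p r" and k: "i \<le> k" "k < r" shows "vis k i"
proof (rule visI)
  have pm: "p \<in> {1..m}" and rm: "r \<in> {1..m}" and pr': "p < r" "\<alpha> p = \<alpha> r" "1 \<le> p"
    using pr by (auto simp: pr_def)
  have si: "sing i" and pi: "p < i" and ir: "i < r"
    and nd: "\<And>p' q'. p < p' \<Longrightarrow> p' < i \<Longrightarrow> i < q' \<Longrightarrow> q' < r \<Longrightarrow> \<alpha> p' = \<alpha> q' \<Longrightarrow> False"
    using i by (auto simp: DS_def)
  show "1 \<le> i" "i \<le> k" using pi pr' k by auto
  show "k < j" if "j \<in> {1..m}" "\<alpha> j = \<alpha> i" "j \<noteq> i" for j using singD[OF si] that by auto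
  fix p0 q0 assume q: "1 \<le> p0" "p0 < i" "i < q0" "q0 \<le> k" "\<alpha> p0 = \<alpha> q0"
  have "q0 < r" using q k by auto
  consider "p < p0" | "p0 = p" | "p0 < p" by linarith
  then show False
  proof cases
    case 1 then show ?thesis using nd[of p0 q0] q \<open>q0 < r\<close> by auto
  next
    case 2
    have q0m: "q0 \<in> {1..m}" using q rm \<open>q0 < r\<close> by auto
    have "p = r \<or> p = q0 \<or> r = q0" using three[OF pm rm q0m pr'(2)] q(5) 2 by simp
    then show ?thesis using q pi \<open>q0 < r\<close> pr'(1) 2 by auto
  next
    case 3 then show ?thesis using nc[of p0 p q0 r] q pi \<open>q0 < r\<close> pr' rm by auto
  qed
qed

lemma visF_iff: assumes pr: "pr p r" and pi: "p < i" shows "vis (r - 1) i \<longleftrightarrow> i \<in> DS p r"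
proof
  assume "i \<in> DS p r" then show "vis (r - 1) i" using DS_vis[OF pr] by (auto simp: DS_def)
next
  assume v: "vis (r - 1) i"
  have pm: "p \<in> {1..m}" and rm: "r \<in> {1..m}" and pr': "p < r" "\<alpha> p = \<alpha> r" "1 \<le> p"
    using pr by (auto simp: pr_def)
  have ir: "i < r" "1 \<le> i" using visD0[OF v] pr' by auto
  have im: "i \<in> {1..m}" using ir rm by auto
  have "sing i" unfolding sing_def
  proof (intro conjI ballI impI)
    fix k assume k: "k \<in> {1..m}" "\<alpha> k = \<alpha> i"
    show "k = i"
    proof (rule ccontr)
      assume ki: "k \<noteq> i"
      then have "r - 1 < k" using visD1[OF v k] by auto
      then consider "k = r" | "r < k" by linarith
      then show False
      proof cases
        case 1
        have "i = p \<or> i = r \<or> p = r" using three[OF im pm rm] k(2) 1 pr'(2) by simp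
        then show ?thesis using pi ir pr'(1) by auto
      next
        case 2 then show ?thesis using nc[of p i r k] pi ir pr' k by auto
      qed
    qed
  qed (use im in auto)
  moreover have "\<not> (\<exists>p' q'. p < p' \<and> p' < i \<and> i < q' \<and> q' < r \<and> \<alpha> p' = \<alpha> q')"
  proof
    assume "\<exists>p' q'. p < p' \<and> p' < i \<and> i < q' \<and> q' < r \<and> \<alpha> p' = \<alpha> q'"
    then obtain p' q' where q: "p < p'" "p' < i" "i < q'" "q' < r" "\<alpha> p' = \<alpha> q'" by blast
    have "q' \<le> r - 1" using q(4) by linarith
    moreover have "1 \<le> p'" using q(1) by linarith
    ultimately show False using visD2[OF v _ q(2,3) _ q(5)] by blast
  qed
  ultimately show "i \<in> DS p r" using pi ir by (simp add: DS_def)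
qed

lemma visE_iff: assumes pr: "pr p r" and j: "j \<in> DS p r" and pi: "p < i"
  shows "vis (j - 1) i \<longleftrightarrow> i \<in> {i \<in> DS p r. i < j}"
proof
  assume "i \<in> {i \<in> DS p r. i < j}" then show "vis (j - 1) i"
    using DS_vis[OF pr, of i "j - 1"] j by (auto simp: DS_def)
next
  assume v: "vis (j - 1) i"
  have pm: "p \<in> {1..m}" and rm: "r \<in> {1..m}" and pr': "p < r" "\<alpha> p = \<alpha> r" "1 \<le> p"
    using pr by (auto simp: pr_def)
  have sj: "sing j" and pj: "p < j" and jr: "j < r"
    and nd: "\<And>p' q'. p < p' \<Longrightarrow> p' < j \<Longrightarrow> j < q' \<Longrightarrow> q' < r \<Longrightarrow> \<alpha> p' = \<alpha> q' \<Longrightarrow> False"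
    using j by (auto simp: DS_def)
  have ij: "i < j" "1 \<le> i" using visD0[OF v] pj by auto
  have ir: "i < r" using ij jr by auto
  have im: "i \<in> {1..m}" using ir rm ij by auto
  have "sing i" unfolding sing_def
  proof (intro conjI ballI impI)
    fix k assume k: "k \<in> {1..m}" "\<alpha> k = \<alpha> i"
    show "k = i"
    proof (rule ccontr)
      assume ki: "k \<noteq> i"
      then have "j - 1 < k" using visD1[OF v k] by auto
      moreover have "k \<noteq> j" using singD[OF sj im] k ki by auto
      ultimately consider "j < k" "k < r" | "k = r" | "r < k" by linarith
      then show False
      proof cases
        case 1 then show ?thesis using nd[of i k] pi ij k by auto
      next
        case 2
        have "i = p \<or> i = r \<or> p = r" using three[OF im pm rm] k(2) 2 pr'(2) by simp
        then show ?thesis using pi ir pr'(1) by auto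
      next
        case 3 then show ?thesis using nc[of p i r k] pi ir pr' k by auto
      qed
    qed
  qed (use im in auto)
  moreover have "\<not> (\<exists>p' q'. p < p' \<and> p' < i \<and> i < q' \<and> q' < r \<and> \<alpha> p' = \<alpha> q')"
  proof
    assume "\<exists>p' q'. p < p' \<and> p' < i \<and> i < q' \<and> q' < r \<and> \<alpha> p' = \<alpha> q'"
    then obtain p' q' where q: "p < p'" "p' < i" "i < q'" "q' < r" "\<alpha> p' = \<alpha> q'" by blast
    have "\<not> q' \<le> j - 1" using visD2[OF v, of p' q'] q pr' by auto
    moreover have "q' \<noteq> j"
    proof
      assume "q' = j"
      then show False using singD[OF sj, of p'] q pr' ij rm by auto
    qed
    ultimately have "j < q'" by auto
    then show False using nd[of p' q'] q ij by auto
  qed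
  ultimately show "i \<in> {i \<in> DS p r. i < j}" using pi ir ij by (simp add: DS_def)
qed

lemma FvF: assumes pr: "pr p r" shows "Fv (r - 1) = (if DS p r = {} then \<alpha> r else \<alpha> (Max (DS p r)))"
proof -
  have vp: "vis (r - 1) p" using vis_p[OF pr] pr by (auto simp: pr_def)
  have "Max {i. vis (r - 1) i} = (if DS p r = {} then p else Max (DS p r))"
    by (rule max_split[OF fin_vis vp visF_iff[OF pr]]) (auto simp: DS_def)
  moreover have "{i. vis (r - 1) i} \<noteq> {}" using vp by auto
  ultimately show ?thesis using pr by (auto simp: Fv_def pr_def)
qed

lemma FvE: assumes pr: "pr p r" and j: "j \<in> DS p r"
  shows "Fv (j - 1) = (if \<exists>i\<in>DS p r. i < j then \<alpha> (Max {i \<in> DS p r. i < j}) else \<alpha> r)"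
proof -
  have vp: "vis (j - 1) p" using vis_p[OF pr] pr j by (auto simp: pr_def DS_def)
  have "Max {i. vis (j - 1) i} = (if {i \<in> DS p r. i < j} = {} then p else Max {i \<in> DS p r. i < j})"
    by (rule max_split[OF fin_vis vp visE_iff[OF pr j]]) (auto simp: DS_def)
  moreover have "{i. vis (j - 1) i} \<noteq> {}" using vp by auto
  ultimately show ?thesis using pr by (auto simp: Fv_def pr_def)
qed

lemma FvO: assumes j: "j \<in> OS"
  shows "Fv (j - 1) = (if \<exists>i\<in>OS. i < j then \<alpha> (Max {i \<in> OS. i < j}) else N)"
  using visOSj[OF j] by (auto simp: Fv_def)

end


context LS begin

abbreviation "P \<equiv> kernel_partition \<alpha> m"

lemma blk_in: "j \<in> {1..m} \<Longrightarrow> {k\<in>{1..m}. \<alpha> k = \<alpha> j} \<in> P"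
  unfolding kernel_partition_def by blast

lemma inP: "B \<in> P \<Longrightarrow> \<exists>j\<in>{1..m}. B = {k\<in>{1..m}. \<alpha> k = \<alpha> j}"
  unfolding kernel_partition_def by blast

lemma inP_mem: assumes "B \<in> P" "x \<in> B" shows "x \<in> {1..m}"
  using inP[OF assms(1)] assms(2) by auto

lemma inP_eq: assumes "B \<in> P" "x \<in> B" "y \<in> B" shows "\<alpha> x = \<alpha> y"
  using inP[OF assms(1)] assms(2,3) by auto

lemma pair_blk: assumes "pr p q" shows "{k\<in>{1..m}. \<alpha> k = \<alpha> p} = {p, q}"
proof -
  have pm: "p \<in> {1..m}" and qm: "q \<in> {1..m}" and pq: "p < q" "\<alpha> p = \<alpha> q"
    using assms by (auto simp: pr_def)
  have "k = p \<or> k = q" if "k \<in> {1..m}" "\<alpha> k = \<alpha> p" for k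
  proof -
    have "p = q \<or> p = k \<or> q = k" using three[OF pm qm that(1) pq(2)] that(2) by simp
    then show ?thesis using pq(1) by auto
  qed
  then show ?thesis using pm qm pq by auto
qed

lemma pair_in: assumes "pr p q" shows "{p, q} \<in> P" "card {p, q} = 2"
proof -
  have "p \<in> {1..m}" using assms by (auto simp: pr_def)
  then show "{p, q} \<in> P" using blk_in pair_blk[OF assms] by metis
  show "card {p, q} = 2" using assms by (auto simp: pr_def)
qed

lemma card2: assumes B: "B \<in> P" "card B = 2" obtains p r where "B = {p, r}" "pr p r"
proof -
  obtain x y where xy: "B = {x, y}" "x \<noteq> y" using B(2) by (auto simp: card_2_iff)
  have xm: "x \<in> {1..m}" "y \<in> {1..m}" using inP_mem[OF B(1)] xy by auto
  have e: "\<alpha> x = \<alpha> y" using inP_eq[OF B(1)] xy by auto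
  show ?thesis
  proof (cases "x < y")
    case True
    then show ?thesis using that[of x y] xy xm e by (auto simp: pr_def)
  next
    case False
    then have "y < x" using xy by auto
    then show ?thesis using that[of y x] xy xm e by (auto simp: pr_def insert_commute)
  qed
qed

lemma sing_iff: "{i} \<in> P \<longleftrightarrow> sing i"
proof
  assume "{i} \<in> P"
  then obtain j where j: "j \<in> {1..m}" "{i} = {k\<in>{1..m}. \<alpha> k = \<alpha> j}" using inP by blast
  have i: "i \<in> {1..m}" "\<alpha> i = \<alpha> j" using j(2) by blast+
  have "k = i" if "k \<in> {1..m}" "\<alpha> k = \<alpha> i" for k
  proof -
    have "k \<in> {k\<in>{1..m}. \<alpha> k = \<alpha> j}" using that i by simp
    then show ?thesis using j(2) by blast
  qed
  then show "sing i" using i unfolding sing_def by blast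
next
  assume s: "sing i"
  then have "{k\<in>{1..m}. \<alpha> k = \<alpha> i} = {i}" unfolding sing_def by blast
  moreover have "i \<in> {1..m}" using s by (simp add: sing_def)
  ultimately show "{i} \<in> P" using blk_in[of i] by simp
qed

lemma inner_pair: "p < r \<Longrightarrow> inner_block {i} {p, r} \<longleftrightarrow> p < i \<and> i < r"
  unfolding inner_block_def by auto

lemma encl_iff: "(\<exists>B\<in>P. card B = 2 \<and> inner_block {i} B) \<longleftrightarrow> encl i"
proof
  assume "\<exists>B\<in>P. card B = 2 \<and> inner_block {i} B"
  then obtain B where B: "B \<in> P" "card B = 2" "inner_block {i} B" by blast
  then obtain p r where pr: "B = {p, r}" "pr p r" using card2 by blast
  then have "p < r" by (simp add: pr_def)
  then have "p < i" "i < r" using B(3) pr(1) inner_pair[of p r i] by simp_all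
  then show "encl i" using pr(2) unfolding encl_def pr_def by blast
next
  assume "encl i"
  then obtain p q where pq: "1 \<le> p" "p < i" "i < q" "q \<le> m" "\<alpha> p = \<alpha> q" unfolding encl_def by blast
  then have "pr p q" by (simp add: pr_def)
  moreover have "inner_block {i} {p, q}" using inner_pair[of p q i] pq by simp
  ultimately show "\<exists>B\<in>P. card B = 2 \<and> inner_block {i} B"
    using pair_in by blast
qed

lemma outer_eq: "outer_singletons P = OS"
  unfolding outer_singletons_def OS_def using sing_iff encl_iff by auto

lemma DIS_eq: assumes pr: "pr p r" shows "direct_inner_singletons P {p, r} = DS p r"
proof -
  have pr': "p < r" "1 \<le> p" using pr by (auto simp: pr_def)
  have key: "(\<exists>B'\<in>P. inner_block {j} B' \<and> inner_block B' {p, r}) \<longleftrightarrow>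
      (\<exists>p' q'. p < p' \<and> p' < j \<and> j < q' \<and> q' < r \<and> \<alpha> p' = \<alpha> q')" if j: "p < j" "j < r" for j
  proof
    assume "\<exists>B'\<in>P. inner_block {j} B' \<and> inner_block B' {p, r}"
    then obtain B' where B': "B' \<in> P" "inner_block {j} B'" "inner_block B' {p, r}" by blast
    obtain x y where xy: "x \<in> B'" "x < j" "y \<in> B'" "j < y" using B'(2) unfolding inner_block_def by auto
    obtain z where z: "z \<in> {p, r}" "\<forall>w\<in>B'. z < w" using B'(3) unfolding inner_block_def by auto
    obtain z' where z': "z' \<in> {p, r}" "\<forall>w\<in>B'. w < z'" using B'(3) unfolding inner_block_def by auto
    have "z < x" using z(2) xy(1) by blast
    then have "z \<noteq> r" using xy(2) j(2) by linarith
    then have "p < x" using z(1) \<open>z < x\<close> by blast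
    moreover have "y < z'" using z'(2) xy(3) by blast
    then have "z' \<noteq> p" using xy(4) j(1) by linarith
    then have "y < r" using z'(1) \<open>y < z'\<close> by blast
    moreover have "\<alpha> x = \<alpha> y" using inP_eq[OF B'(1) xy(1,3)] .
    ultimately show "\<exists>p' q'. p < p' \<and> p' < j \<and> j < q' \<and> q' < r \<and> \<alpha> p' = \<alpha> q'"
      using xy by blast
  next
    assume "\<exists>p' q'. p < p' \<and> p' < j \<and> j < q' \<and> q' < r \<and> \<alpha> p' = \<alpha> q'"
    then obtain p' q' where q: "p < p'" "p' < j" "j < q'" "q' < r" "\<alpha> p' = \<alpha> q'" by blast
    have "pr p' q'" using q pr pr' by (auto simp: pr_def)
    moreover have "inner_block {j} {p', q'}" using inner_pair[of p' q' j] q by simp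
    moreover have "inner_block {p', q'} {p, r}" unfolding inner_block_def
    proof
      show "\<exists>x\<in>{p, r}. \<forall>y\<in>{p', q'}. x < y" using q by (intro bexI[of _ p]) auto
      show "\<exists>x\<in>{p, r}. \<forall>y\<in>{p', q'}. y < x" using q by (intro bexI[of _ r]) auto
    qed
    ultimately show "\<exists>B'\<in>P. inner_block {j} B' \<and> inner_block B' {p, r}" using pair_in by blast
  qed
  show ?thesis
  proof (intro set_eqI iffI)
    fix j assume "j \<in> direct_inner_singletons P {p, r}"
    then have j: "{j} \<in> P" "inner_block {j} {p, r}" "\<not> (\<exists>B'\<in>P. inner_block {j} B' \<and> inner_block B' {p, r})"
      unfolding direct_inner_singletons_def direct_inner_block_def by blast+
    have jj: "p < j" "j < r" using j(2) inner_pair[OF pr'(1)] by blast+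
    have "sing j" using j(1) sing_iff by blast
    moreover have "\<not> (\<exists>p' q'. p < p' \<and> p' < j \<and> j < q' \<and> q' < r \<and> \<alpha> p' = \<alpha> q')"
      using j(3) key[OF jj] by blast
    ultimately show "j \<in> DS p r" using jj unfolding DS_def by blast
  next
    fix j assume "j \<in> DS p r"
    then have j: "sing j" "p < j" "j < r" "\<not> (\<exists>p' q'. p < p' \<and> p' < j \<and> j < q' \<and> q' < r \<and> \<alpha> p' = \<alpha> q')"
      unfolding DS_def by blast+
    have "{j} \<in> P" using j(1) sing_iff by blast
    moreover have "inner_block {j} {p, r}" using inner_pair[OF pr'(1)] j(2,3) by blast
    moreover have "\<not> (\<exists>B'\<in>P. inner_block {j} B' \<and> inner_block B' {p, r})"
      using j(4) key[OF j(2,3)] by blast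
    ultimately show "j \<in> direct_inner_singletons P {p, r}"
      unfolding direct_inner_singletons_def direct_inner_block_def by blast
  qed
qed

lemma finOS: "finite OS"
  by (rule finite_subset[of _ "{1..m}"]) (auto simp: OS_def sing_def)

lemma finDS: "finite (DS p r)"
  by (rule finite_subset[of _ "{p<..<r}"]) (auto simp: DS_def)

lemma inj_sing: "\<forall>i\<in>S. sing i \<Longrightarrow> inj_on \<alpha> S"
  unfolding inj_on_def sing_def by metis

lemma sigma_sing: assumes "sing j" shows "Tr m (\<alpha> j) = Fv (j - 1)"
proof (rule S2)
  show "j \<in> {1..m}" using assms by (simp add: sing_def)
  show "\<forall>i. j < i \<and> i \<le> m \<longrightarrow> \<alpha> i \<noteq> \<alpha> j"
  proof (intro allI impI)
    fix i assume i: "j < i \<and> i \<le> m"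
    show "\<alpha> i \<noteq> \<alpha> j"
    proof
      assume "\<alpha> i = \<alpha> j"
      moreover have "i \<in> {1..m}" using i \<open>j \<in> {1..m}\<close> by auto
      ultimately have "i = j" using singD[OF assms] by blast
      then show False using i by simp
    qed
  qed
qed

lemma sigma_pr: assumes pr: "pr p r" shows "Tr m (\<alpha> r) = Fv (r - 1)"
proof (rule S2)
  have pm: "p \<in> {1..m}" and rm: "r \<in> {1..m}" and pr': "p < r" "\<alpha> p = \<alpha> r"
    using pr by (auto simp: pr_def)
  show "r \<in> {1..m}" using rm .
  show "\<forall>i. r < i \<and> i \<le> m \<longrightarrow> \<alpha> i \<noteq> \<alpha> r"
  proof (intro allI impI)
    fix i assume i: "r < i \<and> i \<le> m"
    show "\<alpha> i \<noteq> \<alpha> r"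
    proof
      assume e: "\<alpha> i = \<alpha> r"
      have im: "i \<in> {1..m}" using i rm by auto
      have "p = r \<or> p = i \<or> r = i" using three[OF pm rm im pr'(2)] e pr'(2) by simp
      then show False using i pr'(1) by auto
    qed
  qed
qed

lemma sigma_N: "Tr m N = (if OS = {} then N else \<alpha> (Max OS))"
  using F_char[of m] visOS by (simp add: Fv_def)

lemma part1: assumes ne: "OS \<noteq> {}" shows "has_cycle (Tr m) (outer_cycle N \<alpha> P)"
proof -
  have "outer_cycle N \<alpha> P = N # rev (map \<alpha> (sorted_list_of_set OS))"
    by (simp add: outer_cycle_def outer_eq)
  moreover have "has_cycle (Tr m) (N # rev (map \<alpha> (sorted_list_of_set OS)))"
  proof (rule cyc_set[OF finOS ne])
    show "inj_on \<alpha> OS" by (rule inj_sing) (auto simp: OS_def)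
    show "N \<notin> \<alpha> ` OS" using rng by (force simp: OS_def sing_def)
    show "Tr m N = \<alpha> (Max OS)" using sigma_N ne by simp
    show "\<forall>j\<in>OS. Tr m (\<alpha> j) = (if \<exists>i\<in>OS. i < j then \<alpha> (Max {i \<in> OS. i < j}) else N)"
    proof
      fix j assume j: "j \<in> OS"
      then have "sing j" by (simp add: OS_def)
      then show "Tr m (\<alpha> j) = (if \<exists>i\<in>OS. i < j then \<alpha> (Max {i \<in> OS. i < j}) else N)"
        using sigma_sing FvO[OF j] by simp
    qed
  qed
  ultimately show ?thesis by simp
qed

lemma part3: assumes pr: "pr p r" and ne: "DS p r \<noteq> {}"
  shows "has_cycle (Tr m) (block_cycle \<alpha> P {p, r})"
proof -
  have pr': "p < r" "\<alpha> p = \<alpha> r" using pr by (auto simp: pr_def)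
  have "Max {p, r} = r" using pr' by simp
  then have "block_cycle \<alpha> P {p, r} = \<alpha> r # rev (map \<alpha> (sorted_list_of_set (DS p r)))"
    by (simp add: block_cycle_def DIS_eq[OF pr])
  moreover have "has_cycle (Tr m) (\<alpha> r # rev (map \<alpha> (sorted_list_of_set (DS p r))))"
  proof (rule cyc_set[OF finDS ne])
    show "inj_on \<alpha> (DS p r)" by (rule inj_sing) (auto simp: DS_def)
    show "\<alpha> r \<notin> \<alpha> ` DS p r"
    proof
      assume "\<alpha> r \<in> \<alpha> ` DS p r"
      then obtain j where j: "j \<in> DS p r" "\<alpha> r = \<alpha> j" by blast
      have "r \<in> {1..m}" using pr by (simp add: pr_def)
      then have "r = j" using singD[of j r] j by (simp add: DS_def)
      then show False using j(1) by (simp add: DS_def)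
    qed
    show "Tr m (\<alpha> r) = \<alpha> (Max (DS p r))" using sigma_pr[OF pr] FvF[OF pr] ne by simp
    show "\<forall>j\<in>DS p r. Tr m (\<alpha> j) = (if \<exists>i\<in>DS p r. i < j then \<alpha> (Max {i \<in> DS p r. i < j}) else \<alpha> r)"
    proof
      fix j assume j: "j \<in> DS p r"
      then have "sing j" by (simp add: DS_def)
      then show "Tr m (\<alpha> j) = (if \<exists>i\<in>DS p r. i < j then \<alpha> (Max {i \<in> DS p r. i < j}) else \<alpha> r)"
        using sigma_sing FvE[OF pr j] by simp
    qed
  qed
  ultimately show ?thesis by simp
qed

lemma set_outer: "set (outer_cycle N \<alpha> P) = insert N (\<alpha> ` OS)"
  by (simp add: outer_cycle_def outer_eq finOS)

lemma set_block: "pr p r \<Longrightarrow> set (block_cycle \<alpha> P {p, r}) = insert (\<alpha> r) (\<alpha> ` DS p r)"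
  by (simp add: block_cycle_def DIS_eq finDS pr_def)

lemma part4:
  assumes x: "x \<in> {1..N}" and xo: "x \<notin> set (outer_cycle N \<alpha> P)"
    and xb: "\<forall>B\<in>P. card B = 2 \<and> direct_inner_singletons P B \<noteq> {} \<longrightarrow> x \<notin> set (block_cycle \<alpha> P B)"
  shows "Tr m x = x"
proof -
  have xb': "x \<notin> set (block_cycle \<alpha> P {p, r})" if pr: "pr p r" "DS p r \<noteq> {}" for p r
    using xb pair_in[OF pr(1)] DIS_eq[OF pr(1)] pr(2) by auto
  have xN: "x \<noteq> N" using xo set_outer by auto
  show ?thesis
  proof (cases "\<forall>i\<in>{1..m}. \<alpha> i \<noteq> x")
    case True
    then show ?thesis using S3 xN by blast
  next
    case False
    then obtain j where j: "j \<in> {1..m}" "\<alpha> j = x" by blast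
    show ?thesis
    proof (cases "sing j")
      case sj: True
      show ?thesis
      proof (cases "encl j")
        case False
        then have "j \<in> OS" using sj by (simp add: OS_def)
        then show ?thesis using xo set_outer j by auto
      next
        case True
        define E where "E = {p. \<exists>q. 1 \<le> p \<and> p < j \<and> j < q \<and> q \<le> m \<and> \<alpha> p = \<alpha> q}"
        have finE: "finite E" by (rule finite_subset[of _ "{..j}"]) (auto simp: E_def)
        have neE: "E \<noteq> {}" using True unfolding encl_def E_def by blast
        define p where "p = Max E"
        have "p \<in> E" using Max_in[OF finE neE] p_def by simp
        then obtain r where r: "1 \<le> p" "p < j" "j < r" "r \<le> m" "\<alpha> p = \<alpha> r" unfolding E_def by blast
        have pr: "pr p r" using r by (simp add: pr_def)
        have "j \<in> DS p r" unfolding DS_def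
        proof (intro CollectI conjI)
          show "sing j" "p < j" "j < r" using sj r by auto
          show "\<not> (\<exists>p' q'. p < p' \<and> p' < j \<and> j < q' \<and> q' < r \<and> \<alpha> p' = \<alpha> q')"
          proof
            assume "\<exists>p' q'. p < p' \<and> p' < j \<and> j < q' \<and> q' < r \<and> \<alpha> p' = \<alpha> q'"
            then obtain p' q' where q: "p < p'" "p' < j" "j < q'" "q' < r" "\<alpha> p' = \<alpha> q'" by blast
            have "p' \<in> E" unfolding E_def using q r by (intro CollectI exI[of _ q']) auto
            then have "p' \<le> p" using Max_ge[OF finE] p_def by simp
            then show False using q by simp
          qed
        qed
        then have "x \<in> set (block_cycle \<alpha> P {p, r})" using set_block[OF pr] j by auto
        moreover have "DS p r \<noteq> {}" using \<open>j \<in> DS p r\<close> by auto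
        ultimately show ?thesis using xb'[OF pr] by blast
      qed
    next
      case False
      then obtain k where k: "k \<in> {1..m}" "\<alpha> k = \<alpha> j" "k \<noteq> j" using j unfolding sing_def by blast
      define p where "p = min j k"
      define r where "r = max j k"
      have pr: "pr p r" using j k unfolding pr_def p_def r_def by (auto simp: min_def max_def)
      have xr: "x = \<alpha> r" using j k unfolding r_def by (auto simp: max_def)
      show ?thesis
      proof (cases "DS p r = {}")
        case False
        then show ?thesis using xb'[OF pr] set_block[OF pr] xr by auto
      next
        case True
        then show ?thesis using sigma_pr[OF pr] FvF[OF pr] xr by simp
      qed
    qed
  qed
qed

lemma main:
  "(outer_singletons P \<noteq> {} \<longrightarrow> has_cycle (Tr m) (outer_cycle N \<alpha> P))
    \<and> (outer_singletons P = {} \<longrightarrow> Tr m N = N)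
    \<and> (\<forall>B\<in>P. card B = 2 \<and> direct_inner_singletons P B \<noteq> {} \<longrightarrow> has_cycle (Tr m) (block_cycle \<alpha> P B))
    \<and> (\<forall>x\<in>{1..N}. x \<notin> set (outer_cycle N \<alpha> P)
          \<and> (\<forall>B\<in>P. card B = 2 \<and> direct_inner_singletons P B \<noteq> {} \<longrightarrow> x \<notin> set (block_cycle \<alpha> P B))
          \<longrightarrow> Tr m x = x)"
proof (intro conjI impI ballI)
  show "outer_singletons P \<noteq> {} \<Longrightarrow> has_cycle (Tr m) (outer_cycle N \<alpha> P)"
    using part1 outer_eq by simp
  show "outer_singletons P = {} \<Longrightarrow> Tr m N = N" using sigma_N outer_eq by simp
next
  fix B assume B: "B \<in> P" "card B = 2 \<and> direct_inner_singletons P B \<noteq> {}"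
  then obtain p r where pr: "B = {p, r}" "pr p r" using card2 by blast
  then show "has_cycle (Tr m) (block_cycle \<alpha> P B)" using part3 B DIS_eq by auto
next
  fix x assume "x \<in> {1..N}" "x \<notin> set (outer_cycle N \<alpha> P)
          \<and> (\<forall>B\<in>P. card B = 2 \<and> direct_inner_singletons P B \<noteq> {} \<longrightarrow> x \<notin> set (block_cycle \<alpha> P B))"
  then show "Tr m x = x" using part4 by blast
qed

end


theorem lemma6:
  fixes N m :: nat and \<alpha> :: "nat \<Rightarrow> nat"
  assumes "N \<ge> 2"
    and "\<forall>i\<in>{1..m}. 1 \<le> \<alpha> i \<and> \<alpha> i \<le> N - 1"
    and "kernel_partition \<alpha> m \<in> NC12 m"
  defines "\<sigma> \<equiv> transp_product N \<alpha> m"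
    and "P \<equiv> kernel_partition \<alpha> m"
  shows "(outer_singletons P \<noteq> {} \<longrightarrow> has_cycle \<sigma> (outer_cycle N \<alpha> P))
    \<and> (outer_singletons P = {} \<longrightarrow> \<sigma> N = N)
    \<and> (\<forall>B\<in>P. card B = 2 \<and> direct_inner_singletons P B \<noteq> {} \<longrightarrow> has_cycle \<sigma> (block_cycle \<alpha> P B))
    \<and> (\<forall>x\<in>{1..N}. x \<notin> set (outer_cycle N \<alpha> P)
          \<and> (\<forall>B\<in>P. card B = 2 \<and> direct_inner_singletons P B \<noteq> {} \<longrightarrow> x \<notin> set (block_cycle \<alpha> P B))
          \<longrightarrow> \<sigma> x = x)"
proof -
  let ?K = "kernel_partition \<alpha> m"
  have nc12: "\<forall>B\<in>?K. card B = 1 \<or> card B = 2" "noncrossing ?K"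
    using assms(3) by (auto simp: NC12_def)
  have blk: "{k\<in>{1..m}. \<alpha> k = \<alpha> j} \<in> ?K" if "j \<in> {1..m}" for j
    using that unfolding kernel_partition_def by blast
  have cardle: "card {k\<in>{1..m}. \<alpha> k = \<alpha> j} \<le> 2" if "j \<in> {1..m}" for j
    using nc12(1) blk[OF that] by fastforce
  have three: "i = j \<or> i = k \<or> j = k"
    if t: "i\<in>{1..m}" "j\<in>{1..m}" "k\<in>{1..m}" "\<alpha> i = \<alpha> j" "\<alpha> i = \<alpha> k" for i j k
  proof (rule ccontr)
    assume d: "\<not> (i = j \<or> i = k \<or> j = k)"
    have "{i, j, k} \<subseteq> {k'\<in>{1..m}. \<alpha> k' = \<alpha> i}" using t by auto
    then have "card {i, j, k} \<le> card {k'\<in>{1..m}. \<alpha> k' = \<alpha> i}" by (intro card_mono) auto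
    moreover have "card {i, j, k} = 3" using d by auto
    ultimately show False using cardle[OF t(1)] by simp
  qed
  have nc: False if t: "1 \<le> a" "a < b" "b < c" "c < d" "d \<le> m" "\<alpha> a = \<alpha> c" "\<alpha> b = \<alpha> d" for a b c d
  proof -
    have am: "a \<in> {1..m}" "b \<in> {1..m}" "c \<in> {1..m}" "d \<in> {1..m}" using t by auto
    let ?B = "{k\<in>{1..m}. \<alpha> k = \<alpha> a}" and ?B' = "{k\<in>{1..m}. \<alpha> k = \<alpha> b}"
    have "?B \<noteq> ?B'"
    proof
      assume "?B = ?B'"
      moreover have "b \<in> ?B'" using am by simp
      ultimately have "b \<in> ?B" by simp
      then have "\<alpha> a = \<alpha> b" by simp
      then have "a = b \<or> a = c \<or> b = c" using three[OF am(1,2,3)] t(6) by simp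
      then show False using t(2,3) by auto
    qed
    moreover have mem: "a \<in> ?B" "c \<in> ?B" "b \<in> ?B'" "d \<in> ?B'" using am t(6,7) by simp_all
    moreover have NC: "\<forall>B\<in>?K. \<forall>B'\<in>?K. B \<noteq> B' \<longrightarrow>
     \<not> (\<exists>k1 l1 k2 l2. k1 < l1 \<and> l1 < k2 \<and> k2 < l2 \<and> k1 \<in> B \<and> k2 \<in> B \<and> l1 \<in> B' \<and> l2 \<in> B')"
      using nc12(2) unfolding noncrossing_def .
    ultimately have H: "\<not> (\<exists>k1 l1 k2 l2. k1 < l1 \<and> l1 < k2 \<and> k2 < l2 \<and> k1 \<in> ?B \<and> k2 \<in> ?B \<and> l1 \<in> ?B' \<and> l2 \<in> ?B')"
      using NC[rule_format, OF blk[OF am(1)] blk[OF am(2)]] by blast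
    have "\<exists>k1 l1 k2 l2. k1 < l1 \<and> l1 < k2 \<and> k2 < l2 \<and> k1 \<in> ?B \<and> k2 \<in> ?B \<and> l1 \<in> ?B' \<and> l2 \<in> ?B'"
      apply (rule exI[of _ a], rule exI[of _ b], rule exI[of _ c], rule exI[of _ d])
      using t(2,3,4) mem by blast
    with H show False by contradiction
  qed
  interpret LS N m \<alpha>
  proof
    fix i assume "i \<in> {1..m}"
    then have "1 \<le> \<alpha> i" "\<alpha> i \<le> N - 1" using assms(2) by blast+
    then show "1 \<le> \<alpha> i \<and> \<alpha> i < N" using assms(1) by linarith
  next
    fix i j k assume "i\<in>{1..m}" "j\<in>{1..m}" "k\<in>{1..m}" "\<alpha> i = \<alpha> j" "\<alpha> i = \<alpha> k"
    then show "i = j \<or> i = k \<or> j = k" by (rule three)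
  next
    fix a b c d assume "1 \<le> a" "a < b" "b < c" "c < d" "d \<le> m" "\<alpha> a = \<alpha> c" "\<alpha> b = \<alpha> d"
    then show False by (rule nc)
  qed
  show ?thesis unfolding \<sigma>_def P_def by (rule main)
qed

end
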